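(* Let $\ell, m$ be positive integers and $n=(\ell+1)m$. For $1\le s\le \ell+1$ put $a_s = e_{(s-1)m+1}+\cdots+e_{sm}\in E^1$. Let $K$ be a Latin $\ell$-dimensional hypercube on $[m]$. Then in $E$ \begin{align*} \partial(a_1\wedge a_2\wedge\cdots\wedge a_{\ell+1}) &= -(a_1-a_2)\wedge \partial(a_2\wedge\cdots\wedge a_{\ell+1}) \\ &= (-1)^{\ell} m\,(a_1-a_2)\wedge(a_2-a_3)\wedge\cdots\wedge(a_\ell - a_{\ell+1}) \\ &= m\sum_{S\in\mathcal{C}[K]} \partial(e_S), \end{align*} where for $S=(i_1,\ldots,i_p)$ one writes $e_S=e_{i_1}\wedge\cdots\wedge e_{i_p}$.
   Context: $R$ is a commutative ring with $1$; $E$ is the graded exterior algebra over $R$ generated by degree-one elements $e_1,\ldots,e_n$. The $R$-linear map $\partial:E^p\to E^{p-1}$ is given by $\partial 1=0$, $\partial e_i=1$, $\partial(e_{i_1}\wedge\cdots\wedge e_{i_p})=\sum_{k=1}^p(-1)^{k-1}e_{i_1}\wedge\cdots\wedge\widehat{e_{i_k}}\wedge\cdots\wedge e_{i_p}$. A Latin $\ell$-dimensional hypercube on $[m]$ is an array $K=[k(i_1,\ldots,i_\ell)]_{1\le i_1,\ldots,i_\ell\le m}$ with entries in $[m]$ such that fixing any $\ell-1$ coordinates, the $m$ entries obtained by varying the remaining one are exactly $[m]$. $\mathcal{C}[K]$ is the family of ordered tuples $(i_1, m+i_2, 2m+i_3,\ldots,(\ell-1)m+i_\ell, \ell m+k(i_1,\ldots,i_\ell))$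 for $1\le i_1,\ldots,i_\ell\le m$. *)

theory Defs
  imports Main "HOL-Library.Function_Algebras"
begin

text \<open>Exterior algebra over a commutative ring 'r on generators e_1,...,e_n.
An element is represented by its coefficient function on the standard basis
e_I (I a finite set of indices, e_I = wedge of e_i, i in I, in increasing order).\<close>

type_synonym 'r ext = "nat set \<Rightarrow> 'r"

definition ext_one :: "'r::comm_ring_1 ext" where
  "ext_one = (\<lambda>I. if I = {} then 1 else 0)"

definition gen :: "nat \<Rightarrow> 'r::comm_ring_1 ext" where
  "gen i = (\<lambda>I. if I = {i} then 1 else 0)"

definition ext_smult :: "'r::comm_ring_1 \<Rightarrow> 'r ext \<Rightarrow> 'r ext" where
  "ext_smult c x = (\<lambda>I. c * x I)"

text \<open>Number of inversions between I and J: e_I wedge e_J = (-1)^inv I J e_(I union J)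
for disjoint I, J.\<close>
definition inv_count :: "nat set \<Rightarrow> nat set \<Rightarrow> nat" where
  "inv_count I J = card {(i, j). i \<in> I \<and> j \<in> J \<and> j < i}"

definition wedge :: "'r::comm_ring_1 ext \<Rightarrow> 'r ext \<Rightarrow> 'r ext" where
  "wedge x y = (\<lambda>K. if finite K then
      (\<Sum>I\<in>Pow K. (-1) ^ inv_count I (K - I) * x I * y (K - I)) else 0)"

definition wedge_list :: "'r::comm_ring_1 ext list \<Rightarrow> 'r ext" where
  "wedge_list xs = foldr wedge xs ext_one"

definition eS :: "nat list \<Rightarrow> 'r::comm_ring_1 ext" where
  "eS S = wedge_list (map gen S)"

text \<open>The R-linear map \<partial> : E^p \<rightarrow> E^(p-1) for the exterior algebra on e_1..e_n:
coefficient of e_J in \<partial> x.  It satisfies \<partial> e_I = sum_k (-1)^(k-1) e_(I - {i_k}).\<close>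
definition bd :: "nat \<Rightarrow> 'r::comm_ring_1 ext \<Rightarrow> 'r ext" where
  "bd n x = (\<lambda>J. \<Sum>i\<in>{1..n} - J. (-1) ^ card {j\<in>J. j < i} * x (insert i J))"

definition latin_hypercube :: "nat \<Rightarrow> nat \<Rightarrow> (nat list \<Rightarrow> nat) \<Rightarrow> bool" where
  "latin_hypercube l m k \<longleftrightarrow>
     (\<forall>xs. length xs = l \<and> set xs \<subseteq> {1..m} \<longrightarrow> k xs \<in> {1..m}) \<and>
     (\<forall>xs j. length xs = l \<and> set xs \<subseteq> {1..m} \<and> j < l \<longrightarrow>
        bij_betw (\<lambda>t. k (xs[j := t])) {1..m} {1..m})"

definition calC :: "nat \<Rightarrow> nat \<Rightarrow> (nat list \<Rightarrow> nat) \<Rightarrow> nat list set" where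
  "calC l m k = (\<lambda>is. map (\<lambda>j. j * m + is ! j) [0..<l] @ [l * m + k is])
                  ` {is. length is = l \<and> set is \<subseteq> {1..m}}"

definition avec :: "nat \<Rightarrow> nat \<Rightarrow> 'r::comm_ring_1 ext" where
  "avec m s = (\<Sum>i\<in>{(s - 1) * m + 1..s * m}. gen i)"

end

theory Submission
  imports Defs
begin

lemma sum_fun_apply: "(\<Sum>i\<in>F. f i) x = (\<Sum>i\<in>F. f i x)"
  by (induction F rule: infinite_finite_induct) auto

definition fin_supp :: "'r::comm_ring_1 ext \<Rightarrow> bool" where
  "fin_supp x \<longleftrightarrow> (\<forall>K. infinite K \<longrightarrow> x K = 0)"

definition sig :: "nat \<Rightarrow> nat set \<Rightarrow> 'r::comm_ring_1" where
  "sig i K = (-1) ^ card {j\<in>K. j < i}"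

definition Lg :: "nat \<Rightarrow> 'r::comm_ring_1 ext \<Rightarrow> 'r ext" where
  "Lg i y = (\<lambda>K. if finite K \<and> i \<in> K then sig i K * y (K - {i}) else 0)"

lemma inv_count_single: "inv_count {i} J = card {j\<in>J. j < i}"
proof -
  have "{(a, j). a \<in> {i} \<and> j \<in> J \<and> j < a} = (\<lambda>j. (i, j)) ` {j\<in>J. j < i}" by auto
  moreover have "inj_on (\<lambda>j. (i, j)) {j\<in>J. j < i}" by (auto simp: inj_on_def)
  ultimately show ?thesis unfolding inv_count_def by (simp add: card_image)
qed

lemma sig_remove_self: "sig i (K - {i}) = sig i K"
  unfolding sig_def by (rule arg_cong[where f="\<lambda>S. (-1)^card S"]) auto

lemma sig_insert_self: "sig i (insert i K) = sig i K"
  unfolding sig_def by (rule arg_cong[where f="\<lambda>S. (-1)^card S"]) auto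

lemma sig_sq: "sig i K * sig i K = (1::'r::comm_ring_1)"
  unfolding sig_def power_mult_distrib[symmetric] by simp

lemma sig_remove:
  assumes "finite K" "j \<in> K" "i \<noteq> j"
  shows "sig i K = (if j < i then -1 else 1) * (sig i (K - {j}) :: 'r::comm_ring_1)"
proof (cases "j < i")
  case True
  have "{x\<in>K. x < i} = insert j {x\<in>K - {j}. x < i}" using True assms by auto
  moreover have "j \<notin> {x\<in>K - {j}. x < i}" by auto
  moreover have "finite {x\<in>K - {j}. x < i}" using assms by auto
  ultimately show ?thesis using True unfolding sig_def by simp
next
  case False
  have "{x\<in>K. x < i} = {x\<in>K - {j}. x < i}" using False assms by auto
  then show ?thesis using False unfolding sig_def by simp
qed

lemma wedge_gen: "wedge (gen i) y = Lg i y"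
proof (rule ext)
  fix K :: "nat set"
  show "wedge (gen i) y K = Lg i y K"
  proof (cases "finite K")
    case True
    have "wedge (gen i) y K = (\<Sum>I\<in>Pow K. (-1) ^ inv_count I (K - I) * (if I = {i} then 1 else 0) * y (K - I))"
      unfolding wedge_def gen_def using True by simp
    also have "\<dots> = (\<Sum>I\<in>Pow K. if I = {i} then (-1) ^ inv_count {i} (K - {i}) * y (K - {i}) else 0)"
      by (rule sum.cong) auto
    also have "\<dots> = (if {i} \<in> Pow K then (-1) ^ inv_count {i} (K - {i}) * y (K - {i}) else 0)"
      using True by (simp add: sum.delta)
    also have "\<dots> = Lg i y K"
    proof -
      have "{j\<in>K. j \<noteq> i \<and> j < i} = {j\<in>K. j < i}" by auto
      then show ?thesis using True unfolding Lg_def inv_count_single by (auto simp: sig_def)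
    qed
    finally show ?thesis .
  qed (simp add: wedge_def Lg_def)
qed

lemma wedge_zero1: "wedge 0 z = 0"
  by (rule ext) (simp add: wedge_def)
lemma wedge_zero2: "wedge z 0 = 0"
  by (rule ext) (simp add: wedge_def)
lemma wedge_add1: "wedge (x + y) z = wedge x z + wedge y z"
  by (rule ext) (auto simp: wedge_def algebra_simps sum.distrib)
lemma wedge_add2: "wedge z (x + y) = wedge z x + wedge z y"
  by (rule ext) (auto simp: wedge_def algebra_simps sum.distrib)
lemma wedge_diff1: "wedge (x - y) z = wedge x z - wedge y z"
  by (rule ext) (auto simp: wedge_def algebra_simps sum_subtractf)
lemma wedge_diff2: "wedge z (x - y) = wedge z x - wedge z y"
  by (rule ext) (auto simp: wedge_def algebra_simps sum_subtractf)
lemma wedge_neg2: "wedge z (- x) = - wedge z x"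
  by (rule ext) (auto simp: wedge_def algebra_simps sum_negf)
lemma wedge_smult1: "wedge (ext_smult c x) z = ext_smult c (wedge x z)"
  by (rule ext) (auto simp: wedge_def ext_smult_def sum_distrib_left algebra_simps)
lemma wedge_smult2: "wedge z (ext_smult c x) = ext_smult c (wedge z x)"
  by (rule ext) (auto simp: wedge_def ext_smult_def sum_distrib_left algebra_simps)
lemma wedge_sum1: "wedge (\<Sum>i\<in>F. f i) z = (\<Sum>i\<in>F. wedge (f i) z)"
proof (induction F rule: infinite_finite_induct)
  case (infinite A) then show ?case by (metis sum.infinite wedge_zero1)
next
  case empty show ?case by (simp only: sum.empty wedge_zero1)
next
  case (insert x F) then show ?case by (simp only: sum.insert[OF insert.hyps] wedge_add1 insert.IH)
qed
lemma wedge_sum2: "wedge z (\<Sum>i\<in>F. f i) = (\<Sum>i\<in>F. wedge z (f i))"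
proof (induction F rule: infinite_finite_induct)
  case (infinite A) then show ?case by (metis sum.infinite wedge_zero2)
next
  case empty show ?case by (simp only: sum.empty wedge_zero2)
next
  case (insert x F) then show ?case by (simp only: sum.insert[OF insert.hyps] wedge_add2 insert.IH)
qed

lemma smult_add: "ext_smult c (x + y) = ext_smult c x + ext_smult c y"
  by (rule ext) (simp add: ext_smult_def algebra_simps)
lemma smult_diff: "ext_smult c (x - y) = ext_smult c x - ext_smult c y"
  by (rule ext) (simp add: ext_smult_def algebra_simps)
lemma smult_neg: "ext_smult c (- y) = - ext_smult c y"
  by (rule ext) (simp add: ext_smult_def algebra_simps)
lemma smult_negc: "ext_smult (- c) y = - ext_smult c y"
  by (rule ext) (simp add: ext_smult_def algebra_simps)
lemma smult_zero: "ext_smult c 0 = 0"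
  by (rule ext) (simp add: ext_smult_def)
lemma smult_zeroc: "ext_smult 0 y = 0"
  by (rule ext) (simp add: ext_smult_def)
lemma smult_one: "ext_smult 1 y = y"
  by (rule ext) (simp add: ext_smult_def)
lemma smult_smult: "ext_smult a (ext_smult b y) = ext_smult (a * b) y"
  by (rule ext) (simp add: ext_smult_def algebra_simps)
lemma smult_sum: "ext_smult c (\<Sum>i\<in>F. f i) = (\<Sum>i\<in>F. ext_smult c (f i))"
proof (induction F rule: infinite_finite_induct)
  case (infinite A) then show ?case by (metis sum.infinite smult_zero)
next
  case empty show ?case by (simp only: sum.empty smult_zero)
next
  case (insert x F) then show ?case by (simp only: sum.insert[OF insert.hyps] smult_add insert.IH)
qed
lemma smult_sumc: "ext_smult (\<Sum>i\<in>F. f i) y = (\<Sum>i\<in>F. ext_smult (f i) y)"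
  by (rule ext) (simp add: ext_smult_def sum_fun_apply sum_distrib_right)

lemma bd_zero: "bd n 0 = 0"
  by (rule ext) (simp add: bd_def)
lemma bd_add: "bd n (x + y) = bd n x + bd n y"
  by (rule ext) (simp add: bd_def algebra_simps sum.distrib)
lemma bd_diff: "bd n (x - y) = bd n x - bd n y"
  by (rule ext) (simp add: bd_def algebra_simps sum_subtractf)
lemma bd_neg: "bd n (- y) = - bd n y"
  by (rule ext) (simp add: bd_def algebra_simps sum_negf)
lemma bd_smult: "bd n (ext_smult c y) = ext_smult c (bd n y)"
  by (rule ext) (simp add: bd_def ext_smult_def sum_distrib_left algebra_simps)
lemma bd_sum: "bd n (\<Sum>i\<in>F. f i) = (\<Sum>i\<in>F. bd n (f i))"
proof (induction F rule: infinite_finite_induct)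
  case (infinite A) then show ?case by (metis sum.infinite bd_zero)
next
  case empty show ?case by (simp only: sum.empty bd_zero)
next
  case (insert x F) then show ?case by (simp only: sum.insert[OF insert.hyps] bd_add insert.IH)
qed
lemma bd_one: "bd n ext_one = 0"
  by (rule ext) (simp add: bd_def ext_one_def)

lemma Lg_add: "Lg i (x + y) = Lg i x + Lg i y"
  using wedge_add2[of "gen i" x y] by (simp add: wedge_gen)
lemma Lg_smult: "Lg i (ext_smult c x) = ext_smult c (Lg i x)"
  using wedge_smult2[of "gen i" c x] by (simp add: wedge_gen)
lemma Lg_sum: "Lg i (\<Sum>j\<in>F. f j) = (\<Sum>j\<in>F. Lg i (f j))"
  using wedge_sum2[of "gen i" f F] by (simp add: wedge_gen)

lemma LL_same: "Lg i (Lg i y) = 0"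
  by (rule ext) (simp add: Lg_def)

lemma LL_anti: "Lg i (Lg j y) + Lg j (Lg i y) = 0"
proof (rule ext)
  fix K :: "nat set"
  show "(Lg i (Lg j y) + Lg j (Lg i y)) K = 0 K"
  proof (cases "finite K \<and> i \<in> K \<and> j \<in> K \<and> i \<noteq> j")
    case True
    then have f: "finite K" "i \<in> K" "j \<in> K" "i \<noteq> j" by auto
    have e: "K - {i} - {j} = K - {j} - {i}" by auto
    have s1: "sig i K = (if j < i then -1 else 1) * (sig i (K - {j}) :: 'a)"
      using sig_remove[OF f(1) f(3) f(4)] .
    have s2: "sig j K = (if i < j then -1 else 1) * (sig j (K - {i}) :: 'a)"
      using sig_remove[OF f(1) f(2), of j] f(4) by auto
    show ?thesis using f unfolding Lg_def plus_fun_apply zero_fun_apply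
      by (simp add: e s1 s2 algebra_simps)
  next
    case False
    then show ?thesis by (auto simp: Lg_def)
  qed
qed

lemma bd_Lg:
  fixes y :: "'r::comm_ring_1 ext"
  assumes "i \<in> {1..n}" "fin_supp y"
  shows "bd n (Lg i y) = y - Lg i (bd n y)"
proof (rule ext)
  fix J :: "nat set"
  show "bd n (Lg i y) J = (y - Lg i (bd n y)) J"
  proof (cases "finite J")
    case False
    then show ?thesis using assms(2) by (simp add: bd_def Lg_def fin_supp_def)
  next
    case fin: True
    show ?thesis
    proof (cases "i \<in> J")
      case False
      have "bd n (Lg i y) J = (\<Sum>t\<in>{1..n} - J. if t = i then y J else 0)"
        unfolding bd_def
      proof (intro sum.cong refl)
        fix t assume t: "t \<in> {1..n} - J"
        show "(-1) ^ card {j \<in> J. j < t} * Lg i y (insert t J) = (if t = i then y J else 0)"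
        proof (cases "t = i")
          case True
          have "(-1) ^ card {j \<in> J. j < t} * Lg i y (insert t J) = sig i J * sig i J * y J"
            using True fin False by (simp add: Lg_def sig_def[symmetric] sig_insert_self)
          then show ?thesis using True by (simp add: sig_sq)
        qed (use False in \<open>simp add: Lg_def\<close>)
      qed
      also have "\<dots> = y J" using assms(1) False by (simp add: sum.delta)
      finally show ?thesis using False by (simp add: Lg_def)
    next
      case True
      have ins: "{1..n} - (J - {i}) = insert i ({1..n} - J)" using True assms(1) by auto
      have "Lg i (bd n y) J = sig i J * (\<Sum>t\<in>insert i ({1..n} - J). sig t (J - {i}) * y (insert t (J - {i})))"
        using True fin unfolding Lg_def bd_def ins
        by (simp add: sig_def[symmetric] del: Diff_iff)
      also have "\<dots> = sig i J * (sig i (J - {i}) * y J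
               + (\<Sum>t\<in>{1..n} - J. sig t (J - {i}) * y (insert t (J - {i}))))"
        by (subst sum.insert) (use True in \<open>simp_all add: insert_absorb[OF True]\<close>)
      also have "\<dots> = y J + (\<Sum>t\<in>{1..n} - J. sig i J * sig t (J - {i}) * y (insert t (J - {i})))"
        by (simp add: sig_remove_self distrib_left sum_distrib_left mult.assoc[symmetric] sig_sq)
      finally have R: "Lg i (bd n y) J = \<dots>" .
      have "bd n (Lg i y) J = (\<Sum>t\<in>{1..n} - J. - (sig i J * sig t (J - {i}) * y (insert t (J - {i}))))"
        unfolding bd_def
      proof (intro sum.cong refl)
        fix t assume t: "t \<in> {1..n} - J"
        then have ti: "t \<noteq> i" "t \<notin> J" using True by auto
        have a1: "sig t J = (if i < t then -1 else 1) * (sig t (J - {i}) :: 'r)"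
          using sig_remove[OF fin True ti(1)] .
        have a2: "sig i (insert t J) = (if t < i then -1 else 1) * (sig i J :: 'r)"
          using sig_remove[of "insert t J" t i] fin ti by (simp add: insert_Diff_if)
        have e: "insert t J - {i} = insert t (J - {i})" using ti by auto
        show "(-1) ^ card {j \<in> J. j < t} * Lg i y (insert t J) = - (sig i J * sig t (J - {i}) * y (insert t (J - {i})))"
          using fin True ti unfolding Lg_def
          by (auto simp: sig_def[symmetric] a1 a2 e algebra_simps)
      qed
      also have "\<dots> = y J - (y J + (\<Sum>t\<in>{1..n} - J. sig i J * sig t (J - {i}) * y (insert t (J - {i}))))"
        by (simp add: sum_negf)
      finally show ?thesis using R by simp
    qed
  qed
qed

definition lin1 :: "nat \<Rightarrow> 'r::comm_ring_1 ext \<Rightarrow> bool" where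
  "lin1 n x \<longleftrightarrow> (\<forall>K. x K \<noteq> 0 \<longrightarrow> (\<exists>i\<in>{1..n}. K = {i}))"

lemma lin1_expand:
  assumes l: "lin1 n x"
  shows "x = (\<Sum>i\<in>{1..n}. ext_smult (x {i}) (gen i))"
proof (rule ext)
  fix K
  have e: "(\<Sum>i\<in>{1..n}. ext_smult (x {i}) (gen i)) K = (\<Sum>i\<in>{1..n}. if K = {i} then x K else 0)"
    unfolding sum_fun_apply by (rule sum.cong) (auto simp: ext_smult_def gen_def)
  show "x K = (\<Sum>i\<in>{1..n}. ext_smult (x {i}) (gen i)) K"
  proof (cases "\<exists>i\<in>{1..n}. K = {i}")
    case True
    then obtain i0 where i0: "i0 \<in> {1..n}" "K = {i0}" by blast
    have "(\<Sum>i\<in>{1..n}. if K = {i} then x K else 0) = (\<Sum>i\<in>{1..n}. if i = i0 then x K else 0)"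
      using i0 by (intro sum.cong) auto
    also have "\<dots> = x K" using i0 by simp
    finally show ?thesis using e by simp
  next
    case False
    then have "x K = 0" using l unfolding lin1_def by blast
    moreover have "(\<Sum>i\<in>{1..n}. if K = {i} then x K else 0) = 0"
      using False by (intro sum.neutral) auto
    ultimately show ?thesis using e by simp
  qed
qed

lemma phi_eq: "bd n x {} = (\<Sum>i\<in>{1..n}. x {i})"
  unfolding bd_def by simp

lemma wedge_lin1:
  assumes l: "lin1 n x"
  shows "wedge x y = (\<Sum>i\<in>{1..n}. ext_smult (x {i}) (Lg i y))"
proof -
  have "wedge x y = wedge (\<Sum>i\<in>{1..n}. ext_smult (x {i}) (gen i)) y"
    by (rule arg_cong[where f="\<lambda>z. wedge z y"], rule lin1_expand[OF l])
  also have "\<dots> = (\<Sum>i\<in>{1..n}. ext_smult (x {i}) (Lg i y))"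
    by (simp add: wedge_sum1 wedge_smult1 wedge_gen)
  finally show ?thesis .
qed

lemma bd_wedge_lin1:
  assumes l: "lin1 n x" and f: "fin_supp y"
  shows "bd n (wedge x y) = ext_smult (bd n x {}) y - wedge x (bd n y)"
proof -
  have "bd n (wedge x y) = (\<Sum>i\<in>{1..n}. ext_smult (x {i}) (y - Lg i (bd n y)))"
    unfolding wedge_lin1[OF l] bd_sum bd_smult
    by (rule sum.cong) (auto simp: bd_Lg[OF _ f])
  also have "\<dots> = ext_smult (bd n x {}) y - wedge x (bd n y)"
    unfolding wedge_lin1[OF l] phi_eq smult_diff sum_subtractf smult_sumc ..
  finally show ?thesis .
qed

lemma anti_sum:
  fixes g :: "nat \<Rightarrow> nat \<Rightarrow> 'a::ab_group_add"
  assumes "finite F" and d: "\<And>i. g i i = 0" and a: "\<And>i j. g i j + g j i = 0"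
  shows "(\<Sum>i\<in>F. \<Sum>j\<in>F. g i j) = 0"
  using assms(1)
proof (induction F rule: finite_induct)
  case empty then show ?case by simp
next
  case (insert x F)
  have "(\<Sum>i\<in>insert x F. \<Sum>j\<in>insert x F. g i j)
      = (g x x + (\<Sum>j\<in>F. g x j)) + (\<Sum>i\<in>F. g i x + (\<Sum>j\<in>F. g i j))"
    using insert.hyps by simp
  also have "\<dots> = (\<Sum>j\<in>F. g x j + g j x) + (\<Sum>i\<in>F. \<Sum>j\<in>F. g i j)"
    by (simp add: d sum.distrib algebra_simps)
  also have "\<dots> = 0" using insert.IH by (simp add: a)
  finally show ?case .
qed

lemma wedge_self:
  assumes l: "lin1 n x"
  shows "wedge x (wedge x y) = 0"
proof -
  have "wedge x (wedge x y) = (\<Sum>i\<in>{1..n}. \<Sum>j\<in>{1..n}. ext_smult (x {i} * x {j}) (Lg i (Lg j y)))"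
    unfolding wedge_lin1[OF l, of "wedge x y"]
    unfolding wedge_lin1[OF l, of y] Lg_sum Lg_smult smult_sum smult_smult ..
  also have "\<dots> = 0"
  proof (rule anti_sum)
    fix i j
    have "ext_smult (x {i} * x {j}) (Lg i (Lg j y)) + ext_smult (x {j} * x {i}) (Lg j (Lg i y))
       = ext_smult (x {i} * x {j}) (Lg i (Lg j y) + Lg j (Lg i y))"
      by (simp add: smult_add mult.commute)
    then show "ext_smult (x {i} * x {j}) (Lg i (Lg j y)) + ext_smult (x {j} * x {i}) (Lg j (Lg i y)) = 0"
      by (simp add: LL_anti smult_zero)
  qed (simp_all add: LL_same smult_zero)
  finally show ?thesis .
qed

lemma lin1_diff: "lin1 n x \<Longrightarrow> lin1 n y \<Longrightarrow> lin1 n (x - y)"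
  unfolding lin1_def by (metis diff_self minus_apply)

lemma fin_supp_wl: "fin_supp (wedge_list bs)"
  by (cases bs) (auto simp: fin_supp_def wedge_list_def wedge_def ext_one_def)

definition rm :: "nat \<Rightarrow> 'a list \<Rightarrow> 'a list" where
  "rm j xs = take j xs @ drop (Suc j) xs"

definition omega :: "'r::comm_ring_1 ext list \<Rightarrow> 'r ext" where
  "omega bs = (\<Sum>j<length bs. ext_smult ((-1) ^ j) (wedge_list (rm j bs)))"

fun diffs :: "'r::comm_ring_1 ext list \<Rightarrow> 'r ext list" where
  "diffs (b1 # b2 # r) = (b1 - b2) # diffs (b2 # r)"
| "diffs _ = []"

lemma wl_Cons: "wedge_list (b # bs) = wedge b (wedge_list bs)"
  by (simp add: wedge_list_def)
lemma wl_Nil: "wedge_list [] = ext_one"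
  by (simp add: wedge_list_def)

lemma omega_Cons: "omega (b # bs) = wedge_list bs - wedge b (omega bs)"
proof -
  have "omega (b # bs) = ext_smult 1 (wedge_list bs)
      + (\<Sum>j<length bs. ext_smult ((-1) ^ Suc j) (wedge_list (b # rm j bs)))"
    unfolding omega_def by (simp only: length_Cons sum.lessThan_Suc_shift) (simp add: rm_def)
  also have "\<dots> = wedge_list bs - wedge b (omega bs)"
    unfolding omega_def wedge_sum2 wedge_smult2 wl_Cons smult_one
    by (simp add: smult_negc sum_negf)
  finally show ?thesis .
qed

lemma bd_wl_omega:
  assumes "\<forall>b\<in>set bs. lin1 n b \<and> bd n b {} = c"
  shows "bd n (wedge_list bs) = ext_smult c (omega bs)"
  using assms
proof (induction bs)
  case Nil
  then show ?case by (simp only: wl_Nil bd_one omega_def list.size lessThan_0 sum.empty smult_zero)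
next
  case (Cons b bs)
  then have l: "lin1 n b" and c: "bd n b {} = c" by auto
  have "bd n (wedge_list (b # bs)) = ext_smult c (wedge_list bs) - wedge b (ext_smult c (omega bs))"
    unfolding wl_Cons bd_wedge_lin1[OF l fin_supp_wl] c using Cons by simp
  also have "\<dots> = ext_smult c (omega (b # bs))"
    unfolding omega_Cons smult_diff wedge_smult2 ..
  finally show ?case .
qed

lemma bd_wl_diffs:
  assumes "bs \<noteq> []" "\<forall>b\<in>set bs. lin1 n b \<and> bd n b {} = c"
  shows "bd n (wedge_list bs) = ext_smult ((-1) ^ (length bs - 1) * c) (wedge_list (diffs bs))"
  using assms
proof (induction bs rule: diffs.induct)
  case (1 b1 b2 r)
  then have l1: "lin1 n b1" and l2: "lin1 n b2" and c1: "bd n b1 {} = c" and c2: "bd n b2 {} = c" by auto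
  have IH: "bd n (wedge_list (b2 # r)) = ext_smult ((-1) ^ length r * c) (wedge_list (diffs (b2 # r)))"
    using 1 by simp
  have w: "wedge_list (b1 # b2 # r) = wedge (b1 - b2) (wedge_list (b2 # r))"
    unfolding wl_Cons wedge_diff1 wedge_self[OF l2] by simp
  have p: "bd n (b1 - b2) {} = 0" using c1 c2 by (simp add: bd_diff)
  have "bd n (wedge_list (b1 # b2 # r)) = - wedge (b1 - b2) (bd n (wedge_list (b2 # r)))"
    unfolding w bd_wedge_lin1[OF lin1_diff[OF l1 l2] fin_supp_wl] p smult_zeroc by simp
  also have "\<dots> = ext_smult ((-1) ^ (length (b1 # b2 # r) - 1) * c) (wedge_list (diffs (b1 # b2 # r)))"
    unfolding IH wedge_smult2 by (simp add: wl_Cons smult_negc[symmetric])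
  finally show ?case .
next
  case "2_1" then show ?case by simp
next
  case ("2_2" b)
  then have l: "lin1 n b" and c: "bd n b {} = c" by auto
  have f: "fin_supp (ext_one :: 'a ext)" by (simp add: fin_supp_def ext_one_def)
  show ?case
    by (simp only: wl_Cons wl_Nil bd_wedge_lin1[OF l f] bd_one wedge_zero2 c diffs.simps list.size)
       simp
qed

definition tup :: "(nat \<Rightarrow> nat set) \<Rightarrow> nat list \<Rightarrow> nat list set" where
  "tup A xs = {t. length t = length xs \<and> (\<forall>q<length xs. t ! q \<in> A (xs ! q))}"

lemma tup_Nil: "tup A [] = {[]}" by (auto simp: tup_def)

lemma tup_Cons: "tup A (x # xs) = (\<lambda>(i, t). i # t) ` (A x \<times> tup A xs)"
proof (intro set_eqI iffI)
  fix t assume t: "t \<in> tup A (x # xs)"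
  then obtain i u where tu: "t = i # u" "length u = length xs"
    unfolding tup_def by (auto simp: length_Suc_conv)
  have h: "\<forall>q<Suc (length xs). t ! q \<in> A ((x#xs) ! q)" using t unfolding tup_def by simp
  then have "i \<in> A x" "u \<in> tup A xs" using tu unfolding tup_def All_less_Suc2 by auto
  then show "t \<in> (\<lambda>(i, t). i # t) ` (A x \<times> tup A xs)"
    using tu by (auto intro!: image_eqI[where x="(i,u)"])
next
  fix t assume "t \<in> (\<lambda>(i, t). i # t) ` (A x \<times> tup A xs)"
  then show "t \<in> tup A (x # xs)" unfolding tup_def by (auto simp: All_less_Suc2)
qed

lemma finite_tup: "\<forall>x\<in>set xs. finite (A x) \<Longrightarrow> finite (tup A xs)"
  by (induction xs) (auto simp: tup_Nil tup_Cons)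

lemma wl_multi:
  assumes "\<forall>x\<in>set xs. finite (A x)"
  shows "wedge_list (map (\<lambda>s. \<Sum>i\<in>A s. g i) xs) = (\<Sum>t\<in>tup A xs. wedge_list (map g t))"
  using assms
proof (induction xs)
  case Nil
  then show ?case by (simp add: tup_Nil)
next
  case (Cons x xs)
  have fx: "finite (A x)" and ft: "finite (tup A xs)" using Cons.prems finite_tup[of xs A] by auto
  have "wedge_list (map (\<lambda>s. \<Sum>i\<in>A s. g i) (x # xs))
      = (\<Sum>i\<in>A x. \<Sum>t\<in>tup A xs. wedge (g i) (wedge_list (map g t)))"
    using Cons by (simp add: wl_Cons wedge_sum1 wedge_sum2 sum.swap[of _ "tup A xs"])
  also have "\<dots> = (\<Sum>p\<in>A x \<times> tup A xs. wedge_list (map g (fst p # snd p)))"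
    by (simp add: sum.cartesian_product wl_Cons case_prod_beta)
  also have "\<dots> = (\<Sum>t\<in>(\<lambda>(i, t). i # t) ` (A x \<times> tup A xs). wedge_list (map g t))"
    by (subst sum.reindex) (auto simp: inj_on_def case_prod_beta)
  finally show ?case by (simp add: tup_Cons)
qed

definition Sf :: "nat \<Rightarrow> nat \<Rightarrow> (nat list \<Rightarrow> nat) \<Rightarrow> nat list \<Rightarrow> nat list" where
  "Sf l m k = (\<lambda>is. map (\<lambda>j. j * m + is ! j) [0..<l] @ [l * m + k is])"

definition ISet :: "nat \<Rightarrow> nat \<Rightarrow> nat list set" where
  "ISet l m = {is. length is = l \<and> set is \<subseteq> {1..m}}"

definition blk :: "nat \<Rightarrow> nat \<Rightarrow> nat set" where
  "blk m s = {(s - 1) * m + 1..s * m}"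

definition rr :: "nat \<Rightarrow> nat \<Rightarrow> nat" where
  "rr j q = (if q < j then q else Suc q)"

definition pr :: "nat \<Rightarrow> nat \<Rightarrow> nat" where
  "pr j r = (if r < j then r else r - 1)"

lemma pr_rr: "pr j (rr j q) = q" by (simp add: pr_def rr_def)
lemma rr_pr: "r \<noteq> j \<Longrightarrow> rr j (pr j r) = r" by (auto simp: pr_def rr_def)
lemma rr_neq: "rr j q \<noteq> j" by (auto simp: rr_def)

lemma Sf_len: "length (Sf l m k is) = Suc l" by (simp add: Sf_def)
lemma Sf_nth: "r \<le> l \<Longrightarrow> Sf l m k is ! r = (if r < l then r * m + is ! r else l * m + k is)"
  by (auto simp: Sf_def nth_append)

lemma rm_len: "j < length ys \<Longrightarrow> length (rm j ys) = length ys - 1"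
  by (simp add: rm_def)
lemma rm_nth: "j < length ys \<Longrightarrow> q < length ys - 1 \<Longrightarrow> rm j ys ! q = ys ! rr j q"
  by (auto simp: rm_def nth_append min_def rr_def)
lemma rm_map: "rm j (map f xs) = map f (rm j xs)"
  by (simp add: rm_def take_map drop_map)

lemma rm_upt: "j < Suc l \<Longrightarrow> q < l \<Longrightarrow> rm j [1..<l+2] ! q = Suc (rr j q)"
  by (subst rm_nth) (auto simp: rr_def nth_upt simp del: upt_Suc)

lemma tup_char:
  assumes "j < Suc l"
  shows "t \<in> tup (blk m) (rm j [1..<l+2]) \<longleftrightarrow>
         length t = l \<and> (\<forall>q<l. t ! q \<in> {rr j q * m + 1..Suc (rr j q) * m})"
proof -
  have "length (rm j [1..<l+2]) = l" using assms by (simp add: rm_len del: upt_Suc)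
  moreover have "\<And>q. q < l \<Longrightarrow> blk m (rm j [1..<l+2] ! q) = {rr j q * m + 1..Suc (rr j q) * m}"
  proof -
    fix q assume "q < l"
    then have e: "rm j [1..<l+2] ! q = Suc (rr j q)" by (rule rm_upt[OF assms])
    show "blk m (rm j [1..<l+2] ! q) = {rr j q * m + 1..Suc (rr j q) * m}"
      unfolding e blk_def by simp
  qed
  ultimately show ?thesis unfolding tup_def by (auto simp del: upt_Suc)
qed

lemma f_len: "j < Suc l \<Longrightarrow> length (rm j (Sf l m k is)) = l"
  by (simp add: rm_len Sf_len)

lemma f_nth: "j < Suc l \<Longrightarrow> q < l \<Longrightarrow>
   rm j (Sf l m k is) ! q = (if rr j q < l then rr j q * m + is ! rr j q else l * m + k is)"
  by (subst rm_nth) (auto simp: Sf_len rr_def Sf_nth)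

lemma comb_bij:
  assumes lat: "latin_hypercube l m k" and m: "m \<ge> 1" and j: "j < Suc l"
  shows "bij_betw (\<lambda>ys. rm j (Sf l m k ys)) (ISet l m) (tup (blk m) (rm j [1..<l+2]))"
proof -
  let ?f = "\<lambda>ys. rm j (Sf l m k ys)"
  let ?T = "tup (blk m) (rm j [1..<l+2])"
  have k_in: "\<And>ys. ys \<in> ISet l m \<Longrightarrow> k ys \<in> {1..m}"
    using lat unfolding latin_hypercube_def ISet_def by blast
  have bijk: "\<And>ys. ys \<in> ISet l m \<Longrightarrow> j < l \<Longrightarrow> bij_betw (\<lambda>t. k (ys[j := t])) {1..m} {1..m}"
    using lat unfolding latin_hypercube_def ISet_def by blast
  have nth_in: "\<And>ys r. ys \<in> ISet l m \<Longrightarrow> r < l \<Longrightarrow> ys ! r \<in> {1..m}"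
    unfolding ISet_def using nth_mem by blast
  have rr_le: "\<And>q. q < l \<Longrightarrow> rr j q \<le> l" by (auto simp: rr_def)
  have into: "?f ` ISet l m \<subseteq> ?T"
  proof
    fix t assume "t \<in> ?f ` ISet l m"
    then obtain ys where ys: "ys \<in> ISet l m" and t: "t = ?f ys" by blast
    have "\<forall>q<l. t ! q \<in> {rr j q * m + 1..Suc (rr j q) * m}"
    proof (intro allI impI)
      fix q assume q: "q < l"
      show "t ! q \<in> {rr j q * m + 1..Suc (rr j q) * m}"
      proof (cases "rr j q < l")
        case True
        then have "ys ! rr j q \<in> {1..m}" using nth_in[OF ys] by blast
        then show ?thesis using True q j by (simp add: t f_nth)
      next
        case False
        then have "rr j q = l" using rr_le[OF q] by simp
        then show ?thesis using k_in[OF ys] q j by (simp add: t f_nth)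
      qed
    qed
    then show "t \<in> ?T" unfolding tup_char[OF j] using j by (simp add: t f_len)
  qed
  have inj: "inj_on ?f (ISet l m)"
  proof (rule inj_onI)
    fix ys zs assume ys: "ys \<in> ISet l m" and zs: "zs \<in> ISet l m" and eq: "?f ys = ?f zs"
    have len: "length ys = l" "length zs = l" using ys zs by (auto simp: ISet_def)
    have nth_eq: "?f ys ! q = ?f zs ! q" for q using eq by simp
    have off: "ys ! r = zs ! r" if r: "r < l" "r \<noteq> j" for r
    proof -
      have q: "pr j r < l" "rr j (pr j r) = r" using r by (auto simp: pr_def rr_def)
      show ?thesis using nth_eq[of "pr j r"] q r j by (simp add: f_nth)
    qed
    show "ys = zs"
    proof (cases "j < l")
      case False
      then show ?thesis using off len j by (intro nth_equalityI) auto
    next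
      case True
      have q: "l - 1 < l" "rr j (l - 1) = l" using True by (auto simp: rr_def)
      have keq: "k ys = k zs" using nth_eq[of "l-1"] q j by (simp add: f_nth)
      have upd: "zs = ys[j := zs ! j]" using off len True
        by (intro nth_equalityI) (auto simp: nth_list_update)
      have "ys ! j \<in> {1..m}" "zs ! j \<in> {1..m}" using nth_in ys zs True by auto
      moreover have "k (ys[j := ys ! j]) = k (ys[j := zs ! j])" using keq upd by simp
      ultimately have "ys ! j = zs ! j"
        using inj_onD[OF bij_betw_imp_inj_on[OF bijk[OF ys True]]] by blast
      then show ?thesis using upd by (metis list_update_id)
    qed
  qed
  have onto: "?T \<subseteq> ?f ` ISet l m"
  proof
    fix t assume t: "t \<in> ?T"
    then have tl: "length t = l" and tq: "\<And>q. q < l \<Longrightarrow> t ! q \<in> {rr j q * m + 1..Suc (rr j q) * m}"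
      using t[unfolded tup_char[OF j]] by auto
    define base where "base = map (\<lambda>r. if r = j then 1 else t ! pr j r - r * m) [0..<l]"
    have bl: "length base = l" by (simp add: base_def)
    have bnth: "\<And>r. r < l \<Longrightarrow> r \<noteq> j \<Longrightarrow> base ! r = t ! pr j r - r * m"
      by (simp add: base_def)
    have prl: "\<And>r. r < l \<Longrightarrow> r \<noteq> j \<Longrightarrow> pr j r < l" using j by (auto simp: pr_def)
    have bval: "\<And>r. r < l \<Longrightarrow> r \<noteq> j \<Longrightarrow> t ! pr j r \<in> {r * m + 1..Suc r * m}"
      using tq prl rr_pr by metis
    have bin: "\<And>r. r < l \<Longrightarrow> base ! r \<in> {1..m}"
    proof -
      fix r assume r: "r < l"
      show "base ! r \<in> {1..m}"
      proof (cases "r = j")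
        case True then show ?thesis using m r by (simp add: base_def)
      next
        case False then show ?thesis using bval[OF r False] bnth[OF r False] by auto
      qed
    qed
    have base_in: "base \<in> ISet l m" unfolding ISet_def using bl bin
      by (auto simp: in_set_conv_nth)
    have key: "?f ys = t" if ys: "ys \<in> ISet l m" and agree: "\<And>r. r < l \<Longrightarrow> r \<noteq> j \<Longrightarrow> ys ! r = base ! r"
      and kk: "j < l \<Longrightarrow> l * m + k ys = t ! (l - 1)" for ys
    proof (rule nth_equalityI)
      show "length (?f ys) = length t" using j tl by (simp add: f_len)
      fix q assume "q < length (?f ys)"
      then have q: "q < l" using j by (simp add: f_len)
      show "?f ys ! q = t ! q"
      proof (cases "rr j q < l")
        case True
        have "ys ! rr j q = t ! q - rr j q * m"
          using agree[OF True rr_neq] bnth[OF True rr_neq] by (simp add: pr_rr)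
        moreover have "t ! q \<ge> rr j q * m + 1" using tq[OF q] by simp
        ultimately show ?thesis using True q j by (simp add: f_nth)
      next
        case False
        then have "rr j q = l" using rr_le[OF q] by simp
        then have "j < l" "q = l - 1" using q by (auto simp: rr_def split: if_splits)
        then show ?thesis using kk False q j by (simp add: f_nth)
      qed
    qed
    show "t \<in> ?f ` ISet l m"
    proof (cases "j < l")
      case False
      have "?f base = t" using key[OF base_in] False by blast
      then show ?thesis using base_in by blast
    next
      case True
      have q: "l - 1 < l" "rr j (l - 1) = l" using True by (auto simp: rr_def)
      define w where "w = t ! (l - 1) - l * m"
      have w: "w \<in> {1..m}" using tq[OF q(1)] q(2) by (auto simp: w_def)
      then obtain v where v: "v \<in> {1..m}" "k (base[j := v]) = w"
        using bijk[OF base_in True] unfolding bij_betw_def by (metis imageE)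
      have is_in: "base[j := v] \<in> ISet l m"
        using base_in v(1) set_update_subset_insert[of base j v] unfolding ISet_def by auto
      have "?f (base[j := v]) = t"
      proof (rule key[OF is_in])
        show "\<And>r. r < l \<Longrightarrow> r \<noteq> j \<Longrightarrow> base[j := v] ! r = base ! r" by simp
        show "l * m + k (base[j := v]) = t ! (l - 1)"
          using v(2) tq[OF q(1)] q(2) by (simp add: w_def)
      qed
      then show ?thesis using is_in by blast
    qed
  qed
  show ?thesis unfolding bij_betw_def using inj into onto by blast
qed

lemma lin1_sumgen:
  assumes "A \<subseteq> {1..n}"
  shows "lin1 n ((\<Sum>i\<in>A. gen i) :: 'r::comm_ring_1 ext)"
  unfolding lin1_def
proof (intro allI impI)
  fix K assume "(\<Sum>i\<in>A. gen i :: 'r ext) K \<noteq> 0"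
  then have "(\<Sum>i\<in>A. gen i K :: 'r) \<noteq> 0" by (simp add: sum_fun_apply)
  then obtain i where "i \<in> A" "(gen i K :: 'r) \<noteq> 0" by (meson sum.neutral)
  then show "\<exists>i\<in>{1..n}. K = {i}" using assms by (auto simp: gen_def split: if_splits)
qed

lemma phi_gen: "i \<in> {1..n} \<Longrightarrow> bd n (gen i :: 'r::comm_ring_1 ext) {} = 1"
  unfolding phi_eq gen_def by simp

lemma phi_sumgen:
  assumes "A \<subseteq> {1..n}"
  shows "bd n ((\<Sum>i\<in>A. gen i) :: 'r::comm_ring_1 ext) {} = of_nat (card A)"
proof -
  have "bd n ((\<Sum>i\<in>A. gen i) :: 'r ext) {} = (\<Sum>i\<in>A. bd n (gen i :: 'r ext) {})"
    by (simp add: bd_sum sum_fun_apply)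
  also have "\<dots> = (\<Sum>i\<in>A. 1)" using assms by (intro sum.cong) (auto simp: phi_gen)
  finally show ?thesis by simp
qed

lemma lin1_gen: "i \<in> {1..n} \<Longrightarrow> lin1 n (gen i :: 'r::comm_ring_1 ext)"
  unfolding lin1_def gen_def by auto

lemma diffs_map: "diffs (map f [i..<i + Suc p]) = map (\<lambda>s. f s - f (s + 1)) [i..<i + p]"
proof (induction p arbitrary: i)
  case 0 then show ?case by simp
next
  case (Suc p)
  have e1: "[i..<i + Suc (Suc p)] = i # [Suc i..<Suc i + Suc p]" by (simp add: upt_rec)
  have e2: "[Suc i..<Suc i + Suc p] = Suc i # [Suc (Suc i)..<Suc i + Suc p]" by (simp add: upt_rec)
  have e3: "[i..<i + Suc p] = i # [Suc i..<Suc i + p]" by (simp add: upt_rec)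
  define rest where "rest = map f [Suc (Suc i)..<Suc i + Suc p]"
  have r: "map f [Suc i..<Suc i + Suc p] = f (Suc i) # rest" unfolding rest_def e2 by simp
  have "diffs (map f [i..<i + Suc (Suc p)]) = (f i - f (Suc i)) # diffs (map f [Suc i..<Suc i + Suc p])"
    unfolding e1 list.map r diffs.simps ..
  also have "\<dots> = (f i - f (Suc i)) # map (\<lambda>s. f s - f (s + 1)) [Suc i..<Suc i + p]"
    unfolding Suc.IH ..
  finally show ?case unfolding e3 list.map by (simp only: Suc_eq_plus1)
qed

theorem lemma2p3:
  fixes l m n :: nat and k :: "nat list \<Rightarrow> nat"
  assumes "l \<ge> 1" and "m \<ge> 1" and "n = (l + 1) * m"
    and "latin_hypercube l m k"
  defines "a \<equiv> (avec m :: nat \<Rightarrow> 'r::comm_ring_1 ext)"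
  shows "bd n (wedge_list (map a [1..<l + 2]))
           = - wedge (a 1 - a 2) (bd n (wedge_list (map a [2..<l + 2])))
       \<and> - wedge (a 1 - a 2) (bd n (wedge_list (map a [2..<l + 2])))
           = ext_smult ((-1) ^ l * of_nat m)
               (wedge_list (map (\<lambda>s. a s - a (s + 1)) [1..<l + 1]))
       \<and> ext_smult ((-1) ^ l * of_nat m)
               (wedge_list (map (\<lambda>s. a s - a (s + 1)) [1..<l + 1]))
           = ext_smult (of_nat m) (\<Sum>S\<in>calC l m k. bd n (eS S))"
proof -
  note l = assms(1) and m = assms(2) and n = assms(3) and lat = assms(4)
  have a_eq: "a s = (\<Sum>i\<in>blk m s. gen i)" for s unfolding a_def avec_def blk_def ..
  have blk_sub: "blk m s \<subseteq> {1..n}" if "1 \<le> s" "s \<le> l + 1" for s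
  proof -
    have "s * m \<le> (l + 1) * m" using that by (intro mult_le_mono1) auto
    then show ?thesis using n that by (auto simp: blk_def)
  qed
  have blk_card: "card (blk m s) = m" if "1 \<le> s" for s
    using that by (cases s) (auto simp: blk_def)
  have aprop: "lin1 n (a s) \<and> bd n (a s) {} = of_nat m" if "1 \<le> s" "s \<le> l + 1" for s
    unfolding a_eq using lin1_sumgen[OF blk_sub[OF that]] phi_sumgen[OF blk_sub[OF that]] blk_card[OF that(1)]
    by simp
  have allprop: "\<forall>b\<in>set (map a [i..<l + 2]). lin1 n b \<and> bd n b {} = of_nat m" if "1 \<le> i" for i
    using aprop that by auto
  define as where "as = map a [1..<l + 2]"
  define D1 where "D1 = wedge_list (diffs as)"
  define D2 where "D2 = wedge_list (diffs (map a [2..<l + 2]))"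
  have as_cons: "as = a 1 # map a [2..<l + 2]" unfolding as_def using upt_conv_Cons[of 1 "l+2"] by (simp add: numeral_2_eq_2 numeral_3_eq_3 del: upt_Suc)
  have as2: "map a [2..<l + 2] = a 2 # map a [3..<l + 2]" using l upt_conv_Cons[of 2 "l+2"] by (simp add: numeral_2_eq_2 numeral_3_eq_3 del: upt_Suc)
  have D1D2: "D1 = wedge (a 1 - a 2) D2"
    unfolding D1_def D2_def as_cons as2 by (simp add: wl_Cons)
  have D1_eq: "D1 = wedge_list (map (\<lambda>s. a s - a (s + 1)) [1..<l + 1])"
    unfolding D1_def as_def using diffs_map[of a 1 l] by (simp add: add.commute)
  have len_as: "length as = Suc l" by (simp add: as_def del: upt_Suc)
  have len2: "length (map a [2..<l + 2]) = l" by (simp del: upt_Suc)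
  have pa: "\<forall>b\<in>set as. lin1 n b \<and> bd n b {} = of_nat m"
    unfolding as_def using allprop[of 1] by (simp del: upt_Suc)
  have pa2: "\<forall>b\<in>set (map a [2..<l + 2]). lin1 n b \<and> bd n b {} = of_nat m"
    using allprop[of 2] by (simp del: upt_Suc)
  have ne: "as \<noteq> []" using len_as by auto
  have ne2: "map a [2..<l + 2] \<noteq> []" using len2 l by auto
  have X1: "bd n (wedge_list as) = ext_smult ((-1) ^ l * of_nat m) D1"
    using bd_wl_diffs[OF ne pa] unfolding D1_def len_as by simp
  have X2: "bd n (wedge_list (map a [2..<l + 2])) = ext_smult ((-1) ^ (l - 1) * of_nat m) D2"
    using bd_wl_diffs[OF ne2 pa2] unfolding D2_def len2 .
  have sgn: "- ((-1) ^ (l - 1) * of_nat m) = ((-1) ^ l * of_nat m :: 'r)"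
    using l by (cases l) auto
  have E2: "- wedge (a 1 - a 2) (bd n (wedge_list (map a [2..<l + 2]))) = ext_smult ((-1) ^ l * of_nat m) D1"
    unfolding X2 wedge_smult2 D1D2 smult_negc[symmetric] sgn ..
  let ?IS = "ISet l m"
  have C: "calC l m k = Sf l m k ` ?IS" by (simp add: calC_def Sf_def ISet_def)
  have injS: "inj_on (Sf l m k) ?IS"
  proof (rule inj_onI)
    fix xs ys assume xs: "xs \<in> ?IS" and ys: "ys \<in> ?IS" and e: "Sf l m k xs = Sf l m k ys"
    have "xs ! r = ys ! r" if "r < l" for r
      using arg_cong[OF e, of "\<lambda>S. S ! r"] that by (simp add: Sf_nth)
    then show "xs = ys" using xs ys by (intro nth_equalityI) (auto simp: ISet_def)
  qed
  have Sf_sub: "set (Sf l m k xs) \<subseteq> {1..n}" if xs: "xs \<in> ?IS" for xs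
  proof
    fix x assume "x \<in> set (Sf l m k xs)"
    then obtain r where r: "r < Suc l" "x = Sf l m k xs ! r" by (auto simp: in_set_conv_nth Sf_len)
    show "x \<in> {1..n}"
    proof (cases "r < l")
      case True
      have "xs ! r \<in> {1..m}" using xs True nth_mem unfolding ISet_def by blast
      moreover have "Suc r * m \<le> (l + 1) * m" by (intro mult_le_mono1) (use True in simp)
      then have "r * m + m \<le> n" using n by simp
      ultimately show ?thesis using r True by (auto simp: Sf_nth)
    next
      case False
      then have "r = l" using r by simp
      moreover have "k xs \<in> {1..m}" using lat xs unfolding latin_hypercube_def ISet_def by blast
      ultimately show ?thesis using r n by (auto simp: Sf_nth)
    qed
  qed
  have "(\<Sum>S\<in>calC l m k. bd n (eS S)) = (\<Sum>xs\<in>?IS. omega (map gen (Sf l m k xs)) :: 'r ext)"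
    unfolding C sum.reindex[OF injS] o_def
  proof (rule sum.cong[OF refl])
    fix xs assume "xs \<in> ?IS"
    have bprop: "\<forall>b\<in>set (map gen (Sf l m k xs)). lin1 n (b :: 'r ext) \<and> bd n b {} = 1"
    proof
      fix b assume "b \<in> set (map gen (Sf l m k xs) :: 'r ext list)"
      then obtain i where i: "i \<in> set (Sf l m k xs)" "b = gen i" by auto
      then have "i \<in> {1..n}" using Sf_sub[OF \<open>xs \<in> ?IS\<close>] by blast
      then show "lin1 n b \<and> bd n b {} = 1" using i lin1_gen[of i n] phi_gen[of i n] by simp
    qed
    show "bd n (eS (Sf l m k xs)) = (omega (map gen (Sf l m k xs)) :: 'r ext)"
      unfolding eS_def using bd_wl_omega[OF bprop] by (simp add: smult_one)
  qed
  also have "\<dots> = (\<Sum>xs\<in>?IS. \<Sum>j<Suc l. ext_smult ((-1) ^ j) (wedge_list (map gen (rm j (Sf l m k xs)))))"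
    by (simp add: omega_def Sf_len rm_map)
  also have "\<dots> = (\<Sum>j<Suc l. ext_smult ((-1) ^ j) (\<Sum>xs\<in>?IS. wedge_list (map gen (rm j (Sf l m k xs)))))"
    unfolding smult_sum by (rule sum.swap)
  also have "\<dots> = (\<Sum>j<Suc l. ext_smult ((-1) ^ j) (\<Sum>t\<in>tup (blk m) (rm j [1..<l+2]). wedge_list (map gen t)))"
  proof (rule sum.cong[OF refl])
    fix j assume "j \<in> {..<Suc l}"
    then have bij: "bij_betw (\<lambda>ys. rm j (Sf l m k ys)) ?IS (tup (blk m) (rm j [1..<l+2]))"
      using comb_bij[OF lat m] by blast
    have h: "(\<Sum>xs\<in>?IS. wedge_list (map gen (rm j (Sf l m k xs))) :: 'r ext)
        = (\<Sum>t\<in>tup (blk m) (rm j [1..<l+2]). wedge_list (map gen t))"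
      by (rule sum.reindex_bij_betw[OF bij, of "\<lambda>t. wedge_list (map gen t)"])
    show "ext_smult ((-1) ^ j) (\<Sum>xs\<in>?IS. wedge_list (map gen (rm j (Sf l m k xs))))
        = ext_smult ((-1) ^ j) (\<Sum>t\<in>tup (blk m) (rm j [1..<l+2]). wedge_list (map gen t) :: 'r ext)"
      by (simp only: h)
  qed
  also have "\<dots> = (\<Sum>j<Suc l. ext_smult ((-1) ^ j) (wedge_list (rm j as)))"
  proof (rule sum.cong[OF refl])
    fix j
    have "wedge_list (rm j as) = wedge_list (map (\<lambda>s. \<Sum>i\<in>blk m s. gen i) (rm j [1..<l+2]))"
      unfolding as_def rm_map a_eq ..
    also have "\<dots> = (\<Sum>t\<in>tup (blk m) (rm j [1..<l+2]). wedge_list (map gen t))"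
      by (rule wl_multi) (simp add: blk_def)
    finally show "ext_smult ((-1) ^ j) (\<Sum>t\<in>tup (blk m) (rm j [1..<l+2]). wedge_list (map gen t))
         = ext_smult ((-1) ^ j) (wedge_list (rm j as))" by simp
  qed
  also have "\<dots> = omega as" unfolding omega_def len_as ..
  finally have sumC: "(\<Sum>S\<in>calC l m k. bd n (eS S)) = omega as" .
  have X4: "ext_smult (of_nat m) (\<Sum>S\<in>calC l m k. bd n (eS S)) = bd n (wedge_list as)"
    unfolding sumC using bd_wl_omega[of as n "of_nat m"] allprop[of 1] by (simp add: as_def)
  show ?thesis
    using X1 E2 X4 D1_eq unfolding as_def by simp
qed

end
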